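(* Let $\lambda$ be a partition of $n$ with $s>t\ge1$, where $t=\lambda_2-1$ and $s=\lambda_1-1$. Let $\mathcal{G}$ be the generating set of $\mathcal{I}_\lambda$ consisting of: $e_1(n),\dots,e_{\ell(\lambda)-1}(n)$; the sets $e_{b_k}(n-k)$ for $1\le k\le t$, where $b_k=\lambda'_1+\cdots+\lambda'_k-k+1$; and all square-free monomials of degree $n-s$. Writing $S=\{x_1,\dots,x_n\}$, the set obtained from $\mathcal{G}$ by removing the $\binom{n-s+t}{t}$ square-free monomials $$e_{n-s}\big(S\setminus\{x_1,x_2,\dots,x_{s-t},x_{i_1},\dots,x_{i_t}\}\big),\qquad s-t<i_1<i_2<\cdots<i_t\le n,$$ still generates $\mathcal{I}_\lambda$.
   Context: $k$ is a field of characteristic $0$ and $R=k[x_1,\dots,x_n]$. For a set $S$ of variables, $e_r(S)$ is the $r$-th elementary symmetric polynomial in the variables of $S$ ($e_0=1$, $e_r(S)=0$ if $r>|S|$); note $e_r(S)$ with $|S|=r$ is the square-free monomial $\prod_{x\in S}x$. For $1\le m\le n$, $e_r(m)=\{e_r(S): S\subseteq\{x_1,\dots,x_n\},\ |S|=m\}$. A partition $\lambda$ of $n$ has parts $\lambda_1\ge\lambda_2\ge\cdots$ (zero beyond its length $\ell(\lambda)$) and conjugate $\lambda'_i=\#\{j:\lambda_j\ge i\}$. For $1\le m\le n$ let $\delta_m(\lambda)=\lambda'_n+\cdots+\lambda'_{n-m+1}$ ($\lambda'_i=0$ for $i>\lambda_1$). The De Concini–Procesi ideal $\mathcal{I}_\lambda\subseteq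 R$ is the ideal generated by all elements of the sets $e_r(m)$ with $1\le m\le n$ and $m\ge r>m-\delta_m(\lambda)$. *)

theory Defs
  imports "HOL-Library.Poly_Mapping"
begin

text \<open>The ring R = k[x_1,...,x_n] consists of the polynomials involving only x_1..x_n.\<close>
type_synonym 'a mpoly = "(nat \<Rightarrow>\<^sub>0 nat) \<Rightarrow>\<^sub>0 'a"

definition var :: "nat \<Rightarrow> 'a::comm_ring_1 mpoly" where
  "var i = Poly_Mapping.single (Poly_Mapping.single i 1) 1"

definition polys_in :: "nat \<Rightarrow> 'a::comm_ring_1 mpoly set" where
  "polys_in n = {p. \<forall>m \<in> Poly_Mapping.keys p. Poly_Mapping.keys m \<subseteq> {1..n}}"

definition ideal_gen :: "nat \<Rightarrow> 'a::comm_ring_1 mpoly set \<Rightarrow> 'a mpoly set" where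
  "ideal_gen n G = {p. \<exists>F c. finite F \<and> F \<subseteq> G \<and> (\<forall>g\<in>F. c g \<in> polys_in n)
                          \<and> p = (\<Sum>g\<in>F. c g * g)}"

definition esym :: "nat \<Rightarrow> nat set \<Rightarrow> 'a::comm_ring_1 mpoly" where
  "esym r S = (\<Sum>T\<in>{T. T \<subseteq> S \<and> card T = r}. \<Prod>i\<in>T. var i)"

definition esym_set :: "nat \<Rightarrow> nat \<Rightarrow> nat \<Rightarrow> 'a::comm_ring_1 mpoly set" where
  "esym_set n r m = {esym r S | S. S \<subseteq> {1..n} \<and> card S = m}"

definition is_partition :: "nat list \<Rightarrow> nat \<Rightarrow> bool" where
  "is_partition lam n \<longleftrightarrow> sorted_wrt (\<ge>) lam \<and> (\<forall>x\<in>set lam. x > 0) \<and> sum_list lam = n"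

definition part :: "nat list \<Rightarrow> nat \<Rightarrow> nat" where
  "part lam i = (if 1 \<le> i \<and> i \<le> length lam then lam ! (i - 1) else 0)"

definition conj_part :: "nat list \<Rightarrow> nat \<Rightarrow> nat" where
  "conj_part lam i = card {j. 1 \<le> j \<and> j \<le> length lam \<and> part lam j \<ge> i}"

definition delta :: "nat list \<Rightarrow> nat \<Rightarrow> nat \<Rightarrow> nat" where
  "delta lam n m = (\<Sum>i\<in>{n - m + 1..n}. conj_part lam i)"

text \<open>Generators of the De Concini--Procesi ideal: e_r(m) with 1 \<le> m \<le> n and
  m \<ge> r > m - delta_m (written additively to avoid truncated subtraction).\<close>
definition DP_gens :: "nat list \<Rightarrow> nat \<Rightarrow> 'a::comm_ring_1 mpoly set" where
  "DP_gens lam n = (\<Union>m\<in>{1..n}. \<Union>r\<in>{r. r \<le> m \<and> m < r + delta lam n m}. esym_set n r m)"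

definition DP_ideal :: "nat list \<Rightarrow> nat \<Rightarrow> 'a::comm_ring_1 mpoly set" where
  "DP_ideal lam n = ideal_gen n (DP_gens lam n)"

end

theory Submission
  imports Defs
begin

lemma polys_in_0: "0 \<in> polys_in n" by (simp add: polys_in_def)
lemma polys_in_1: "1 \<in> polys_in n" by (simp add: polys_in_def)
lemma polys_in_add:
  assumes "p \<in> polys_in n" "q \<in> polys_in n" shows "p + q \<in> polys_in n"
proof -
  have "\<forall>m\<in>Poly_Mapping.keys (p + q). Poly_Mapping.keys m \<subseteq> {1..n}"
  proof
    fix m assume "m \<in> Poly_Mapping.keys (p + q)"
    then have "m \<in> Poly_Mapping.keys p \<or> m \<in> Poly_Mapping.keys q" using keys_add[of p q] by blast
    then show "Poly_Mapping.keys m \<subseteq> {1..n}" using assms unfolding polys_in_def by auto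
  qed
  then show ?thesis unfolding polys_in_def by simp
qed
lemma polys_in_uminus: "p \<in> polys_in n \<Longrightarrow> - p \<in> polys_in n"
  unfolding polys_in_def by simp
lemma polys_in_mult:
  assumes "p \<in> polys_in n" "q \<in> polys_in n" shows "p * q \<in> polys_in n"
proof -
  have "\<forall>m\<in>Poly_Mapping.keys (p * q). Poly_Mapping.keys m \<subseteq> {1..n}"
  proof
  fix m assume "m \<in> Poly_Mapping.keys (p * q)"
  then obtain a b where ab: "m = a + b" "a \<in> Poly_Mapping.keys p" "b \<in> Poly_Mapping.keys q"
    using keys_mult[of p q] by auto
  have "Poly_Mapping.keys m \<subseteq> Poly_Mapping.keys a \<union> Poly_Mapping.keys b"
    using ab(1) keys_add[of a b] by simp
  moreover have "Poly_Mapping.keys a \<subseteq> {1..n}" using ab(2) assms(1) unfolding polys_in_def by auto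
  moreover have "Poly_Mapping.keys b \<subseteq> {1..n}" using ab(3) assms(2) unfolding polys_in_def by auto
  ultimately show "Poly_Mapping.keys m \<subseteq> {1..n}" by auto
  qed
  then show ?thesis unfolding polys_in_def by simp
qed
lemma polys_in_single0: "Poly_Mapping.single 0 c \<in> polys_in n"
  by (simp add: polys_in_def split: if_splits)
lemma polys_in_var: "i \<in> {1..n} \<Longrightarrow> (var i :: 'a::comm_ring_1 mpoly) \<in> polys_in n"
  by (simp add: polys_in_def var_def)
lemma polys_in_prod: "finite T \<Longrightarrow> T \<subseteq> {1..n} \<Longrightarrow> (\<Prod>i\<in>T. var i :: 'a::comm_ring_1 mpoly) \<in> polys_in n"
proof (induction T rule: finite_induct)
  case (insert x F)
  then have "x \<in> {1..n}" by blast
  then show ?case using insert by (simp add: polys_in_mult polys_in_var)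
qed (simp add: polys_in_1)

lemma ig_I:
  assumes "finite F" "F \<subseteq> X" "\<forall>g\<in>F. c g \<in> polys_in n" "p = (\<Sum>g\<in>F. c g * g)"
  shows "p \<in> ideal_gen n X"
  unfolding ideal_gen_def mem_Collect_eq
  by (rule exI[of _ F], rule exI[of _ c]) (use assms in simp)
lemma ig_E:
  assumes "p \<in> ideal_gen n X"
  obtains F c where "finite F" "F \<subseteq> X" "\<forall>g\<in>F. c g \<in> polys_in n" "p = (\<Sum>g\<in>F. c g * g)"
  using assms unfolding ideal_gen_def mem_Collect_eq by (elim exE conjE) simp
lemma ig_gen: "g \<in> X \<Longrightarrow> g \<in> ideal_gen n X"
  unfolding ideal_gen_def
  by (rule CollectI, rule exI[of _ "{g}"], rule exI[of _ "\<lambda>_. 1"]) (simp add: polys_in_1)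
lemma ig_zero: "0 \<in> ideal_gen n X"
  unfolding ideal_gen_def by (rule CollectI, rule exI[of _ "{}"]) simp
lemma ig_add:
  assumes "p \<in> ideal_gen n X" "q \<in> ideal_gen n X" shows "p + q \<in> ideal_gen n X"
proof -
  obtain F1 c1 where 1: "finite F1" "F1 \<subseteq> X" "\<forall>g\<in>F1. c1 g \<in> polys_in n" "p = (\<Sum>g\<in>F1. c1 g * g)"
    using assms(1) by (rule ig_E)
  obtain F2 c2 where 2: "finite F2" "F2 \<subseteq> X" "\<forall>g\<in>F2. c2 g \<in> polys_in n" "q = (\<Sum>g\<in>F2. c2 g * g)"
    using assms(2) by (rule ig_E)
  define c where "c g = (if g \<in> F1 then c1 g else 0) + (if g \<in> F2 then c2 g else 0)" for g
  have "(\<Sum>g\<in>F1 \<union> F2. c g * g) = (\<Sum>g\<in>F1 \<union> F2. (if g \<in> F1 then c1 g * g else 0))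
        + (\<Sum>g\<in>F1 \<union> F2. (if g \<in> F2 then c2 g * g else 0))"
    unfolding sum.distrib[symmetric] by (rule sum.cong) (simp_all add: c_def distrib_right)
  also have "\<dots> = sum (\<lambda>g. c1 g * g) ((F1 \<union> F2) \<inter> F1) + sum (\<lambda>g. c2 g * g) ((F1 \<union> F2) \<inter> F2)"
    using 1 2 by (simp only: sum.inter_restrict finite_UnI)
  also have "(F1 \<union> F2) \<inter> F1 = F1" by blast
  also have "(F1 \<union> F2) \<inter> F2 = F2" by blast
  also have "sum (\<lambda>g. c1 g * g) F1 + sum (\<lambda>g. c2 g * g) F2 = p + q" using 1 2 by simp
  finally have "p + q = (\<Sum>g\<in>F1 \<union> F2. c g * g)" by simp
  moreover have "\<forall>g\<in>F1 \<union> F2. c g \<in> polys_in n"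
  proof
    fix g assume "g \<in> F1 \<union> F2"
    have "(if g \<in> F1 then c1 g else 0) \<in> polys_in n" using 1 by (simp add: polys_in_0)
    moreover have "(if g \<in> F2 then c2 g else 0) \<in> polys_in n" using 2 by (simp add: polys_in_0)
    ultimately show "c g \<in> polys_in n" unfolding c_def by (rule polys_in_add)
  qed
  moreover have "finite (F1 \<union> F2)" "F1 \<union> F2 \<subseteq> X" using 1 2 by auto
  ultimately show ?thesis by (intro ig_I[of "F1 \<union> F2" _ c]) auto
qed
lemma ig_mult:
  assumes "c \<in> polys_in n" "p \<in> ideal_gen n X" shows "c * p \<in> ideal_gen n X"
proof -
  obtain F c1 where 1: "finite F" "F \<subseteq> X" "\<forall>g\<in>F. c1 g \<in> polys_in n" "p = (\<Sum>g\<in>F. c1 g * g)"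
    using assms(2) by (rule ig_E)
  have "c * p = (\<Sum>g\<in>F. (c * c1 g) * g)" using 1 by (simp add: sum_distrib_left mult.assoc)
  moreover have "\<forall>g\<in>F. c * c1 g \<in> polys_in n" using 1 assms by (auto intro: polys_in_mult)
  ultimately show ?thesis using 1 by (intro ig_I[of F _ "\<lambda>g. c * c1 g"]) auto
qed
lemma ig_sum: "finite A \<Longrightarrow> (\<And>x. x \<in> A \<Longrightarrow> f x \<in> ideal_gen n X) \<Longrightarrow> sum f A \<in> ideal_gen n X"
  by (induction A rule: finite_induct) (auto intro: ig_add ig_zero)
lemma ig_diff:
  assumes "p \<in> ideal_gen n X" "q \<in> ideal_gen n X" shows "p - q \<in> ideal_gen n X"
proof -
  have "(- 1) * q \<in> ideal_gen n X" by (rule ig_mult[OF _ assms(2)]) (intro polys_in_uminus polys_in_1)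
  then have "- q \<in> ideal_gen n X" by simp
  then have "p + (- q) \<in> ideal_gen n X" by (rule ig_add[OF assms(1)])
  then show ?thesis by (simp only: diff_conv_add_uminus)
qed
lemma ig_subset:
  assumes "X \<subseteq> ideal_gen n Y" shows "ideal_gen n X \<subseteq> ideal_gen n Y"
proof
  fix p assume "p \<in> ideal_gen n X"
  then obtain F c where 1: "finite F" "F \<subseteq> X" "\<forall>g\<in>F. c g \<in> polys_in n" "p = (\<Sum>g\<in>F. c g * g)"
    by (rule ig_E)
  show "p \<in> ideal_gen n Y" unfolding 1(4)
    by (rule ig_sum[OF 1(1)]) (use 1 assms in \<open>auto intro: ig_mult\<close>)
qed
lemma ig_mono: "X \<subseteq> Y \<Longrightarrow> ideal_gen n X \<subseteq> ideal_gen n Y"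
  by (rule ig_subset) (auto intro: ig_gen)
lemma ig_cancel:
  fixes p :: "'a::field_char_0 mpoly"
  assumes "k \<noteq> 0" "of_nat k * p \<in> ideal_gen n X" shows "p \<in> ideal_gen n X"
proof -
  have "Poly_Mapping.single 0 (1 / of_nat k) * (of_nat k * p) \<in> ideal_gen n X"
    by (rule ig_mult[OF polys_in_single0 assms(2)])
  moreover have "Poly_Mapping.single 0 (1 / of_nat k) * (of_nat k :: 'a mpoly) = 1"
  proof -
    have "Poly_Mapping.single 0 (1 / of_nat k) * (of_nat k :: 'a mpoly)
        = Poly_Mapping.single 0 (1 / of_nat k) * Poly_Mapping.single 0 (of_nat k)"
      by (simp only: single_of_nat)
    also have "\<dots> = Poly_Mapping.single 0 (1 / of_nat k * of_nat k)"
      using mult_single[of "0::nat \<Rightarrow>\<^sub>0 nat" "1 / of_nat k :: 'a" 0 "of_nat k"] by simp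
    also have "\<dots> = 1" using assms(1) by simp
    finally show ?thesis .
  qed
  ultimately show ?thesis by (simp add: mult.assoc[symmetric])
qed

abbreviation mon :: "nat set \<Rightarrow> 'a::comm_ring_1 mpoly" where
  "mon T \<equiv> \<Prod>i\<in>T. var i"

lemma finite_subsets_card: "finite S \<Longrightarrow> finite {T. T \<subseteq> S \<and> card T = r}"
  by (rule finite_subset[of _ "Pow S"]) auto

lemma esym_card:
  assumes "finite S" shows "esym (card S) S = mon S"
proof -
  have "{T. T \<subseteq> S \<and> card T = card S} = {S}"
  proof
    show "{T. T \<subseteq> S \<and> card T = card S} \<subseteq> {S}" using card_subset_eq[OF assms] by blast
  qed simp
  then show ?thesis by (simp add: esym_def)
qed

lemma L1:
  assumes "finite S" "x \<notin> S"
  shows "(\<Sum>W\<in>{W. W \<subseteq> insert x S \<and> card W = Suc r \<and> x \<in> W}. mon W)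
         = var x * (esym r S :: 'a::comm_ring_1 mpoly)"
proof -
  have "(\<Sum>W\<in>{W. W \<subseteq> insert x S \<and> card W = Suc r \<and> x \<in> W}. mon W)
      = (\<Sum>U\<in>{U. U \<subseteq> S \<and> card U = r}. mon (insert x U) :: 'a mpoly)"
  proof -
    let ?C = "{U. U \<subseteq> S \<and> card U = r}"
    have inj: "inj_on (insert x) ?C"
    proof (rule inj_onI)
      fix U V assume "U \<in> ?C" "V \<in> ?C" "insert x U = insert x V"
      moreover have "x \<notin> U" "x \<notin> V" using \<open>U \<in> ?C\<close> \<open>V \<in> ?C\<close> assms(2) by blast+
      ultimately show "U = V" using insert_ident by metis
    qed
    have img: "{W. W \<subseteq> insert x S \<and> card W = Suc r \<and> x \<in> W} = insert x ` ?C"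
    proof
      show "insert x ` ?C \<subseteq> {W. W \<subseteq> insert x S \<and> card W = Suc r \<and> x \<in> W}"
      proof
        fix W assume "W \<in> insert x ` ?C"
        then obtain U where U: "U \<subseteq> S" "card U = r" "W = insert x U" by blast
        have "finite U" using U(1) assms(1) finite_subset by blast
        moreover have "x \<notin> U" using U(1) assms(2) by blast
        ultimately have "card W = Suc r" using U by simp
        then show "W \<in> {W. W \<subseteq> insert x S \<and> card W = Suc r \<and> x \<in> W}" using U by blast
      qed
      show "{W. W \<subseteq> insert x S \<and> card W = Suc r \<and> x \<in> W} \<subseteq> insert x ` ?C"
      proof
        fix W assume W: "W \<in> {W. W \<subseteq> insert x S \<and> card W = Suc r \<and> x \<in> W}"
        then have W1: "W \<subseteq> insert x S" "card W = Suc r" "x \<in> W" by auto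
        have "W - {x} \<subseteq> S" using W1 by blast
        moreover have "card (W - {x}) = r" using W1 by simp
        ultimately have "W - {x} \<in> ?C" by blast
        moreover have "W = insert x (W - {x})" using W1 by blast
        ultimately show "W \<in> insert x ` ?C" by blast
      qed
    qed
    show ?thesis unfolding img by (rule sum.reindex[OF inj, unfolded comp_def])
  qed
  also have "\<dots> = (\<Sum>U\<in>{U. U \<subseteq> S \<and> card U = r}. var x * mon U)"
  proof (rule sum.cong[OF refl])
    fix U assume "U \<in> {U. U \<subseteq> S \<and> card U = r}"
    then have "finite U" "x \<notin> U" using assms finite_subset by blast+
    then show "mon (insert x U) = var x * mon U" by simp
  qed
  also have "\<dots> = var x * esym r S" by (simp add: esym_def sum_distrib_left)
  finally show ?thesis .
qed

lemma E1:
  assumes "finite S" "x \<notin> S"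
  shows "esym (Suc r) (insert x S) = esym (Suc r) S + var x * (esym r S :: 'a::comm_ring_1 mpoly)"
proof -
  let ?B = "{W. W \<subseteq> insert x S \<and> card W = Suc r}"
  have fin: "finite ?B" using assms by (intro finite_subsets_card) simp
  have "esym (Suc r) (insert x S) = (\<Sum>W\<in>?B. mon W :: 'a mpoly)" by (simp add: esym_def)
  also have "\<dots> = (\<Sum>W\<in>{W\<in>?B. x \<in> W}. mon W) + (\<Sum>W\<in>{W\<in>?B. x \<notin> W}. mon W)"
  proof -
    have "?B = {W\<in>?B. x \<in> W} \<union> {W\<in>?B. x \<notin> W}" by blast
    moreover have "{W\<in>?B. x \<in> W} \<inter> {W\<in>?B. x \<notin> W} = {}" by blast
    ultimately show ?thesis using fin by (metis (no_types, lifting) finite_Un sum.union_disjoint)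
  qed
  also have "{W\<in>?B. x \<in> W} = {W. W \<subseteq> insert x S \<and> card W = Suc r \<and> x \<in> W}" by auto
  also have "{W\<in>?B. x \<notin> W} = {W. W \<subseteq> S \<and> card W = Suc r}" using assms(2) by auto
  finally show ?thesis using L1[OF assms] by (simp add: esym_def add.commute)
qed

lemma E2:
  assumes "finite T"
  shows "(\<Sum>x\<in>T. var x * esym r (T - {x})) = of_nat (Suc r) * (esym (Suc r) T :: 'a::comm_ring_1 mpoly)"
proof -
  let ?B = "{W. W \<subseteq> T \<and> card W = Suc r}"
  have "(\<Sum>x\<in>T. var x * (esym r (T - {x}) :: 'a mpoly))
      = (\<Sum>x\<in>T. \<Sum>W\<in>{W. W \<in> ?B \<and> x \<in> W}. mon W)"
  proof (rule sum.cong[OF refl])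
    fix x assume x: "x \<in> T"
    have "var x * (esym r (T - {x}) :: 'a mpoly)
        = (\<Sum>W\<in>{W. W \<subseteq> insert x (T - {x}) \<and> card W = Suc r \<and> x \<in> W}. mon W)"
      using assms by (intro L1[symmetric]) auto
    also have "insert x (T - {x}) = T" using x by auto
    finally show "var x * (esym r (T - {x}) :: 'a mpoly) = (\<Sum>W\<in>{W. W \<in> ?B \<and> x \<in> W}. mon W)"
      by (simp add: conj_assoc)
  qed
  also have "\<dots> = (\<Sum>W\<in>?B. \<Sum>x\<in>{x. x \<in> T \<and> x \<in> W}. mon W)"
    using assms by (intro sum.swap_restrict) (auto intro: finite_subsets_card)
  also have "\<dots> = (\<Sum>W\<in>?B. of_nat (Suc r) * mon W)"
  proof (rule sum.cong[OF refl])
    fix W assume "W \<in> ?B"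
    then have "{x. x \<in> T \<and> x \<in> W} = W" "card W = Suc r" by auto
    then show "(\<Sum>x\<in>{x. x \<in> T \<and> x \<in> W}. mon W) = (of_nat (Suc r) * mon W :: 'a mpoly)"
      by (simp add: of_nat_mult)
  qed
  also have "\<dots> = of_nat (Suc r) * esym (Suc r) T" by (simp add: esym_def sum_distrib_left)
  finally show ?thesis .
qed

lemma E3:
  assumes "finite T"
  shows "(\<Sum>x\<in>T. esym r (T - {x})) = of_nat (card T - r) * (esym r T :: 'a::comm_ring_1 mpoly)"
proof -
  let ?B = "{U. U \<subseteq> T \<and> card U = r}"
  have "(\<Sum>x\<in>T. (esym r (T - {x}) :: 'a mpoly)) = (\<Sum>x\<in>T. \<Sum>U\<in>{U. U \<in> ?B \<and> x \<notin> U}. mon U)"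
  proof (rule sum.cong[OF refl])
    fix x assume "x \<in> T"
    have "{U. U \<subseteq> T - {x} \<and> card U = r} = {U. U \<in> ?B \<and> x \<notin> U}" by auto
    then show "(esym r (T - {x}) :: 'a mpoly) = (\<Sum>U\<in>{U. U \<in> ?B \<and> x \<notin> U}. mon U)"
      by (simp add: esym_def)
  qed
  also have "\<dots> = (\<Sum>U\<in>?B. \<Sum>x\<in>{x. x \<in> T \<and> x \<notin> U}. mon U)"
    using assms by (intro sum.swap_restrict) (auto intro: finite_subsets_card)
  also have "\<dots> = (\<Sum>U\<in>?B. of_nat (card T - r) * mon U)"
  proof (rule sum.cong[OF refl])
    fix U assume U: "U \<in> ?B"
    then have "{x. x \<in> T \<and> x \<notin> U} = T - U" by auto
    moreover have "card (T - U) = card T - r"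
    proof -
      have UT: "U \<subseteq> T" "card U = r" using U by auto
      then show ?thesis using card_Diff_subset[OF finite_subset[OF UT(1) assms] UT(1)] by simp
    qed
    ultimately show "(\<Sum>x\<in>{x. x \<in> T \<and> x \<notin> U}. mon U) = (of_nat (card T - r) * mon U :: 'a mpoly)"
      by simp
  qed
  also have "\<dots> = of_nat (card T - r) * esym r T" by (simp add: esym_def sum_distrib_left)
  finally show ?thesis .
qed

definition expo :: "nat set \<Rightarrow> (nat \<Rightarrow>\<^sub>0 nat)" where
  "expo T = (\<Sum>i\<in>T. Poly_Mapping.single i 1)"

lemma mono_expo: "finite T \<Longrightarrow> (mon T :: 'a::comm_ring_1 mpoly) = Poly_Mapping.single (expo T) 1"
  by (induction T rule: finite_induct) (simp_all add: expo_def var_def mult_single)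

lemma lookup_expo: "Poly_Mapping.lookup (expo T) (j::nat) = (if finite T \<and> j \<in> T then 1 else (0::nat))"
proof (cases "finite T")
  case True
  have "Poly_Mapping.lookup (expo T) j = (\<Sum>i\<in>T. Poly_Mapping.lookup (Poly_Mapping.single i (1::nat)) j)"
    unfolding expo_def by (rule lookup_sum)
  also have "\<dots> = (\<Sum>i\<in>T. if i = j then 1 else 0)"
    by (rule sum.cong[OF refl]) (simp add: lookup_single when_def)
  also have "\<dots> = (if j \<in> T then 1 else 0)" using True by (simp add: sum.delta)
  finally show ?thesis using True by simp
qed (simp add: expo_def)

lemma expo_inj:
  assumes "finite T" "finite T'" "expo T = expo T'" shows "T = T'"
proof (rule set_eqI)
  fix j :: nat
  have "Poly_Mapping.lookup (expo T) j = Poly_Mapping.lookup (expo T') j" using assms(3) by simp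
  then show "j \<in> T \<longleftrightarrow> j \<in> T'" using assms(1,2) unfolding lookup_expo by (auto split: if_splits)
qed

lemma lookup_monoo:
  assumes "finite T" "finite T'"
  shows "Poly_Mapping.lookup (mon T' :: 'a::comm_ring_1 mpoly) (expo T) = (if T' = T then 1 else 0)"
proof -
  have "(expo T' = expo T) = (T' = T)" using assms expo_inj by blast
  show ?thesis
  proof (cases "T' = T")
    case True then show ?thesis using assms by (simp add: mono_expo)
  next
    case False
    then have "expo T' \<noteq> expo T" using \<open>(expo T' = expo T) = (T' = T)\<close> by simp
    then show ?thesis using assms False by (simp add: mono_expo lookup_single_not_eq)
  qed
qed

lemma lookup_esym:
  assumes "finite S" "finite T"
  shows "Poly_Mapping.lookup (esym r S :: 'a::comm_ring_1 mpoly) (expo T) = (if T \<subseteq> S \<and> card T = r then 1 else 0)"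
proof -
  have "Poly_Mapping.lookup (esym r S :: 'a mpoly) (expo T) = (\<Sum>T'\<in>{T'. T' \<subseteq> S \<and> card T' = r}. (if T' = T then (1::'a) else 0))"
    unfolding esym_def lookup_sum
  proof (rule sum.cong[OF refl])
    fix T' assume "T' \<in> {T'. T' \<subseteq> S \<and> card T' = r}"
    then have fT': "finite T'" using assms(1) finite_subset by blast
    show "Poly_Mapping.lookup (mon T' :: 'a mpoly) (expo T) = (if T' = T then (1::'a) else 0)"
      by (rule lookup_monoo[OF assms(2) fT'])
  qed
  also have "\<dots> = (if T \<subseteq> S \<and> card T = r then 1 else 0)"
    using assms by (simp add: sum.delta' finite_subsets_card)
  finally show ?thesis .
qed

lemma mono_inj:
  assumes "finite T" "finite T'" "(mon T :: 'a::comm_ring_1 mpoly) = mon T'"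
  shows "T = T'"
proof -
  have "Poly_Mapping.lookup (mon T' :: 'a mpoly) (expo T) = 1"
    using assms(3) lookup_monoo[OF assms(1) assms(1), where 'a='a] by simp
  then have "(if T' = T then (1::'a) else 0) = 1" using lookup_monoo[OF assms(1) assms(2), where 'a='a] by simp
  then show ?thesis by (auto split: if_splits)
qed

lemma esym_not_monoo:
  assumes "finite S" "finite W" "1 \<le> r" "r < card S"
  shows "(esym r S :: 'a::comm_ring_1 mpoly) \<noteq> mon W"
proof
  assume eq: "(esym r S :: 'a mpoly) = mon W"
  have "r \<le> card S" using assms(4) by simp
  then obtain T where T: "T \<subseteq> S" "card T = r" by (rule obtain_subset_with_card_n)
  have fT: "finite T" using T assms finite_subset by blast
  have "T \<noteq> {}" using T assms(3) by auto
  then obtain x where x: "x \<in> T" by blast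
  have "\<not> S \<subseteq> T"
  proof
    assume "S \<subseteq> T"
    then have "card S \<le> card T" using card_mono[OF fT] by blast
    then show False using T assms by simp
  qed
  then obtain y where y: "y \<in> S" "y \<notin> T" by blast
  define T' where "T' = insert y (T - {x})"
  have fT': "finite T'" using fT by (simp add: T'_def)
  have "y \<notin> T - {x}" using y by blast
  then have "card T' = Suc (card (T - {x}))" using fT by (simp add: T'_def)
  also have "card (T - {x}) = r - 1" using fT x T by simp
  finally have cT': "card T' = r" using assms(3) by simp
  have T': "T' \<subseteq> S" "card T' = r" "T' \<noteq> T"
    using T x y cT' by (auto simp: T'_def)
  have "Poly_Mapping.lookup (esym r S :: 'a mpoly) (expo T) = 1" using lookup_esym[OF assms(1) fT, of r, where 'a='a] T by simp
  then have "T = W" using eq lookup_monoo[OF fT assms(2), where 'a='a] by (auto split: if_splits)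
  have "Poly_Mapping.lookup (esym r S :: 'a mpoly) (expo T') = 1" using lookup_esym[OF assms(1) fT', of r, where 'a='a] T' by simp
  then have "T' = W" using eq lookup_monoo[OF fT' assms(2), where 'a='a] by (auto split: if_splits)
  then show False using \<open>T = W\<close> T' by simp
qed


lemma part_sum:
  assumes "is_partition lam n" shows "(\<Sum>j\<in>{1..length lam}. part lam j) = n"
proof -
  have "(\<Sum>j\<in>{1..length lam}. part lam j) = (\<Sum>k<length lam. part lam (Suc k))"
    by (simp add: sum.atLeast1_atMost_eq)
  also have "\<dots> = (\<Sum>k<length lam. lam ! k)"
    by (rule sum.cong) (auto simp: part_def)
  also have "\<dots> = sum_list lam" by (simp add: sum_list_sum_nth lessThan_atLeast0)
  finally show ?thesis using assms by (simp add: is_partition_def)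
qed

lemma part_pos:
  assumes "is_partition lam n" "1 \<le> j" "j \<le> length lam" shows "0 < part lam j"
proof -
  have "lam ! (j - 1) \<in> set lam" using assms by auto
  then show ?thesis using assms by (auto simp: part_def is_partition_def)
qed

lemma part_mono:
  assumes "is_partition lam n" "1 \<le> i" "i \<le> j" shows "part lam j \<le> part lam i"
proof (cases "j \<le> length lam")
  case True
  show ?thesis
  proof (cases "i = j")
    case False
    then have "i - 1 < j - 1" using assms by auto
    then have "lam ! (i - 1) \<ge> lam ! (j - 1)"
      using sorted_wrt_nth_less[of "(\<ge>)" lam "i - 1" "j - 1"] assms True
      by (simp add: is_partition_def)
    then show ?thesis using assms True by (simp add: part_def)
  qed simp
qed (simp add: part_def)

lemma P_formula:
  "(\<Sum>i\<in>{1..c}. conj_part lam i) = (\<Sum>j\<in>{1..length lam}. min (part lam j) c)"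
proof -
  have "(\<Sum>i\<in>{1..c}. conj_part lam i) = (\<Sum>i\<in>{1..c}. \<Sum>j\<in>{j. j \<in> {1..length lam} \<and> i \<le> part lam j}. 1)"
    by (rule sum.cong) (auto simp: conj_part_def intro: arg_cong[where f=card])
  also have "\<dots> = (\<Sum>j\<in>{1..length lam}. \<Sum>i\<in>{i. i \<in> {1..c} \<and> i \<le> part lam j}. 1)"
    by (rule sum.swap_restrict) auto
  also have "\<dots> = (\<Sum>j\<in>{1..length lam}. min (part lam j) c)"
  proof (rule sum.cong[OF refl])
    fix j
    have "{i. i \<in> {1..c} \<and> i \<le> part lam j} = {1..min (part lam j) c}" by auto
    then show "(\<Sum>i\<in>{i. i \<in> {1..c} \<and> i \<le> part lam j}. 1) = min (part lam j) c" by simp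
  qed
  finally show ?thesis .
qed

theorem mainTheorem7:
  fixes lam :: "nat list" and n s t :: nat
  assumes "is_partition lam n"
    and "s = part lam 1 - 1" and "t = part lam 2 - 1"
    and "s > t" and "t \<ge> 1"
  defines "b \<equiv> (\<lambda>k. (\<Sum>i\<in>{1..k}. conj_part lam i) + 1 - k)"
  defines "G \<equiv> (\<Union>r\<in>{1..length lam - 1}. esym_set n r n)
              \<union> (\<Union>k\<in>{1..t}. esym_set n (b k) (n - k))
              \<union> esym_set n (n - s) (n - s)"
  defines "Rem \<equiv> {esym (n - s) ({1..n} - ({1..s - t} \<union> I)) | I.
                    I \<subseteq> {s - t + 1..n} \<and> card I = t}"
  shows "ideal_gen n (G - Rem) = (DP_ideal lam n :: 'a::field_char_0 mpoly set)"
proof -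
  note part = assms(1)
  define len where "len = length lam"
  define P where "P k = (\<Sum>i\<in>{1..k}. conj_part lam i)" for k
  define Q where "Q k = (\<Sum>j\<in>{2..len}. min (part lam j) k)" for k
  define J where "J = (ideal_gen n (G - Rem) :: 'a mpoly set)"
  define A where "A = {1..s - t}"
  have bP: "b k = P k + 1 - k" for k by (simp add: b_def P_def)
  have p1: "part lam 1 = s + 1" using assms by linarith
  have p2: "part lam 2 = t + 1" using assms by linarith
  have len2: "2 \<le> len" using p2 by (auto simp: part_def len_def split: if_splits)
  have pj: "1 \<le> part lam j \<and> part lam j \<le> t + 1" if "j \<in> {2..len}" for j
    using part_pos[OF part, of j] part_mono[OF part, of 2 j] that p2 by (auto simp: len_def)
  have split12: "{1..len} = insert 1 {2..len}" using len2 by auto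
  have sumrest: "(\<Sum>j\<in>{2..len}. part lam j) + (s + 1) = n"
    using part_sum[OF part] split12 p1 by (simp add: len_def)
  have PQ: "P k = min (s + 1) k + Q k" for k
    unfolding P_def P_formula Q_def len_def[symmetric] split12 using p1 by simp
  have Qle: "Q k + (s + 1) \<le> n" for k
  proof -
    have "Q k \<le> (\<Sum>j\<in>{2..len}. part lam j)" unfolding Q_def by (rule sum_mono) simp
    then show ?thesis using sumrest by linarith
  qed
  have Qbig: "Q k + (s + 1) = n" if "t + 1 \<le> k" for k
  proof -
    have "Q k = (\<Sum>j\<in>{2..len}. part lam j)" unfolding Q_def
    proof (rule sum.cong[OF refl])
      fix j assume "j \<in> {2..len}"
      then have "part lam j \<le> t + 1" using pj by blast
      then show "min (part lam j) k = part lam j" using that by simp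
    qed
    then show ?thesis using sumrest by linarith
  qed
  have Qsmall: "k \<le> Q k" if "k \<le> t + 1" for k
  proof -
    have "min (part lam 2) k \<le> Q k" unfolding Q_def
      by (rule member_le_sum[of 2 "{2..len}" "\<lambda>j. min (part lam j) k"]) (use len2 in auto)
    then show ?thesis using p2 that by simp
  qed
  have Qmono: "Q k \<le> Q k'" if "k \<le> k'" for k k'
    unfolding Q_def by (rule sum_mono) (use that in auto)
  have Q1: "Q 1 = len - 1"
  proof -
    have "Q 1 = (\<Sum>j\<in>{2..len}. 1)" unfolding Q_def
    proof (rule sum.cong[OF refl])
      fix j assume "j \<in> {2..len}"
      then have "1 \<le> part lam j" using pj by blast
      then show "min (part lam j) 1 = 1" by simp
    qed
    then show ?thesis by simp
  qed
  have nbig: "len + s \<le> n" using Qle[of 1] Q1 len2 by simp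
  have Pn: "P n = n" using PQ[of n] Qbig[of n] nbig assms(4) by simp
  have Ple: "P k \<le> n" for k using PQ[of k] Qle[of k] by simp
  have b1: "b 1 = len" using bP[of 1] PQ[of 1] Q1 len2 by simp
  have Pk: "k \<le> P k" if "k \<le> s + 1" for k using PQ[of k] that by simp
  have bmono: "b k \<le> b (Suc k)" if "Suc k \<le> t" for k
  proof -
    have "P k + 1 \<le> P (Suc k)" using PQ[of k] PQ[of "Suc k"] Qmono[of k "Suc k"] that assms(4) by simp
    then show ?thesis using bP[of k] bP[of "Suc k"] Pk[of k] that assms(4) by simp
  qed
  have bge1: "1 \<le> b k" if "k \<le> t" for k using bP[of k] Pk[of k] that assms(4) by simp
  have ble: "b k \<le> n - s" if "k \<le> t" for k
    using bP[of k] PQ[of k] Qle[of k] that assms(4) by simp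
  have delta_eq: "delta lam n m = n - P (n - m)" if "m \<le> n" for m
  proof -
    have "{n - m + 1..n} = {1..n} - {1..n - m}" by auto
    then have "delta lam n m = P n - P (n - m)"
      unfolding delta_def P_def by (simp add: sum_diff_nat)
    then show ?thesis using Pn by simp
  qed
  have RemE: "\<exists>W. finite W \<and> W \<inter> A = {} \<and> x = mon W" if "x \<in> Rem" for x
  proof -
    have "\<exists>I. x = esym (n - s) ({1..n} - ({1..s - t} \<union> I)) \<and> I \<subseteq> {s - t + 1..n} \<and> card I = t"
      using that unfolding Rem_def mem_Collect_eq .
    then obtain I where I: "I \<subseteq> {s - t + 1..n}" "card I = t" "x = esym (n - s) ({1..n} - ({1..s - t} \<union> I))"
      by (elim exE conjE) simp
    define W where "W = {1..n} - ({1..s - t} \<union> I)"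
    have fI: "finite I" using I(1) finite_subset by blast
    have d: "{1..s - t} \<inter> I = {}" using I(1) by auto
    have "card ({1..s - t} \<union> I) = card {1..s - t} + card I"
      by (rule card_Un_disjoint) (use fI d in auto)
    then have cU: "card ({1..s - t} \<union> I) = s" using I(2) assms(4) by simp
    have sub: "{1..s - t} \<union> I \<subseteq> {1..n}" using I(1) nbig by auto
    have fW: "finite W" by (simp add: W_def)
    have "card W = card {1..n} - card ({1..s - t} \<union> I)"
      unfolding W_def by (rule card_Diff_subset) (use fI sub in auto)
    then have cW: "card W = n - s" using cU by simp
    have "esym (n - s) W = mon W" using esym_card[OF fW] cW by simp
    then have "x = mon W" using I(3) by (simp add: W_def)
    moreover have "W \<inter> A = {}" by (auto simp: W_def A_def)
    ultimately show ?thesis using fW by blast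
  qed
  have notRem: "x \<notin> Rem" if "x = esym r S" "finite S" "1 \<le> r" "r < card S" for x r S
  proof
    assume "x \<in> Rem"
    then have "\<exists>W. finite W \<and> W \<inter> A = {} \<and> x = mon W" by (rule RemE)
    then obtain W where W: "finite W" "x = mon W" by blast
    have "(esym r S :: 'a mpoly) \<noteq> mon W" by (rule esym_not_monoo[OF that(2) W(1) that(3) that(4)])
    then show False using W(2) that(1) by simp
  qed
  have g1: "esym r {1..n} \<in> J" if "1 \<le> r" "r \<le> len - 1" for r
  proof -
    have "esym r {1..n} \<in> esym_set n r n" unfolding esym_set_def by auto
    then have "esym r {1..n} \<in> G" unfolding G_def using that by (auto simp: len_def)
    moreover have "esym r {1..n} \<notin> Rem" using that nbig by (intro notRem[of _ r "{1..n}"]) auto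
    ultimately show ?thesis unfolding J_def by (intro ig_gen) blast
  qed
  have g2: "esym (b k) S \<in> J" if "1 \<le> k" "k \<le> t" "S \<subseteq> {1..n}" "card S = n - k" for k S
  proof -
    have "esym (b k) S \<in> esym_set n (b k) (n - k)" unfolding esym_set_def using that by auto
    then have "esym (b k) S \<in> G" unfolding G_def using that by auto
    moreover have "esym (b k) S \<notin> Rem" using that nbig ble[of k] bge1[of k] assms(4)
      by (intro notRem[of _ "b k" S]) (auto intro: finite_subset)
    ultimately show ?thesis unfolding J_def by (intro ig_gen) blast
  qed
  have g3: "mon U \<in> J" if "U \<subseteq> {1..n}" "card U = n - s" "U \<inter> A \<noteq> {}" for U
  proof -
    have fU: "finite U" using that(1) finite_subset by blast
    have eU: "esym (n - s) U = (mon U :: 'a mpoly)" using esym_card[OF fU, where 'a='a] that(2) by simp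
    have "esym (n - s) U \<in> esym_set n (n - s) (n - s)" unfolding esym_set_def using that by auto
    then have "esym (n - s) U \<in> G" unfolding G_def by auto
    moreover have "esym (n - s) U \<notin> Rem"
    proof
      assume "esym (n - s) U \<in> Rem"
      then have "\<exists>W. finite W \<and> W \<inter> A = {} \<and> esym (n - s) U = (mon W :: 'a mpoly)" by (rule RemE)
      then obtain W where W: "finite W" "W \<inter> A = {}" "esym (n - s) U = (mon W :: 'a mpoly)" by blast
      have "(mon U :: 'a mpoly) = mon W" using W(3) eU by simp
      then have "U = W" by (rule mono_inj[OF fU W(1)])
      then show False using W(2) that(3) by simp
    qed
    ultimately have "esym (n - s) U \<in> J" unfolding J_def by (intro ig_gen) blast
    then show ?thesis using eU by simp
  qed
  have JJ: "J = ideal_gen n (G - Rem)" by (simp add: J_def)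
  have main: "\<forall>k S. k \<le> t \<longrightarrow> b k \<le> r \<longrightarrow> S \<subseteq> {1..n} \<longrightarrow> card S = n - k \<longrightarrow> esym r S \<in> J" for r
  proof (induction r)
    case 0
    then show ?case using bge1 by (metis le_zero_eq not_one_le_zero)
  next
    case (Suc r)
    note outer = Suc.IH
    have "k \<le> t \<longrightarrow> b k \<le> Suc r \<longrightarrow> (\<forall>S. S \<subseteq> {1..n} \<longrightarrow> card S = n - k \<longrightarrow> esym (Suc r) S \<in> J)" for k
    proof (induction k)
      case 0
      show ?case
      proof (intro impI allI)
        fix S :: "nat set" assume S: "S \<subseteq> {1..n}" "card S = n - 0"
        then have Sn: "S = {1..n}" using card_subset_eq[of "{1..n}" S] by simp
        consider "Suc r \<le> len - 1" | "Suc r = len" | "len < Suc r" by linarith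
        then show "esym (Suc r) S \<in> J"
        proof cases
          case 1 then show ?thesis using g1 Sn by simp
        next
          case 2
          have "(\<Sum>x\<in>{1..n}. esym len ({1..n} - {x})) \<in> J"
          proof (rule ig_sum[of _ _ n "G - Rem", folded JJ])
            fix x assume "x \<in> {1..n}"
            then show "esym len ({1..n} - {x}) \<in> J" using g2[of 1 "{1..n} - {x}"] b1 assms(5) by auto
          qed simp
          then have "of_nat (n - len) * esym len {1..n} \<in> J"
            using E3[of "{1..n}" len, where 'a='a] by simp
          then have "esym len {1..n} \<in> J" unfolding J_def
            by (rule ig_cancel[rotated]) (use nbig assms(4) in simp)
          then show ?thesis using 2 Sn by simp
        next
          case 3
          have "(\<Sum>x\<in>{1..n}. var x * esym r ({1..n} - {x})) \<in> J"
          proof (rule ig_sum[of _ _ n "G - Rem", folded JJ])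
            fix x assume x: "x \<in> {1..n}"
            have "esym r ({1..n} - {x}) \<in> J" using outer b1 3 assms(5) x by auto
            then show "var x * esym r ({1..n} - {x}) \<in> J" unfolding J_def
              by (rule ig_mult[OF polys_in_var[OF x]])
          qed simp
          then have "of_nat (Suc r) * esym (Suc r) {1..n} \<in> J"
            using E2[of "{1..n}" r, where 'a='a] by simp
          then have "esym (Suc r) {1..n} \<in> J" unfolding J_def
            by (rule ig_cancel[rotated]) simp
          then show ?thesis using Sn by simp
        qed
      qed
    next
      case (Suc k)
      show ?case
      proof (intro impI allI)
        fix S :: "nat set" assume kt: "Suc k \<le> t" and bk: "b (Suc k) \<le> Suc r"
          and S: "S \<subseteq> {1..n}" "card S = n - Suc k"
        show "esym (Suc r) S \<in> J"
        proof (cases "b (Suc k) = Suc r")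
          case True
          then show ?thesis using g2[of "Suc k" S] kt S by simp
        next
          case False
          then have bkr: "b (Suc k) \<le> r" using bk by simp
          have fS: "finite S" using S finite_subset by blast
          have "card S < card {1..n}" using S kt assms(4) nbig by simp
          moreover have "{1..n} \<subseteq> S \<Longrightarrow> card {1..n} \<le> card S" using card_mono[OF fS] by blast
          ultimately have "\<not> {1..n} \<subseteq> S" by linarith
          then obtain y where y: "y \<in> {1..n}" "y \<notin> S" by blast
          have ci: "card (insert y S) = n - k" using S(2) y(2) fS kt assms(4) nbig by simp
          have ys: "insert y S \<subseteq> {1..n}" using S(1) y(1) by blast
          have "k \<le> t \<longrightarrow> b k \<le> Suc r \<longrightarrow> (\<forall>S. S \<subseteq> {1..n} \<longrightarrow> card S = n - k \<longrightarrow> esym (Suc r) S \<in> J)"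
            by (rule Suc.IH)
          then have c1: "esym (Suc r) (insert y S) \<in> J"
            using kt bk bmono[of k] ci ys by simp
          have c2: "esym r S \<in> J" using outer kt bkr S by blast
          then have "var y * esym r S \<in> J" unfolding J_def by (rule ig_mult[OF polys_in_var[OF y(1)]])
          then have "esym (Suc r) (insert y S) - var y * esym r S \<in> J"
            using c1 unfolding J_def by (rule ig_diff[rotated])
          then show ?thesis using E1[OF fS y(2), of r, where 'a='a] by simp
        qed
      qed
    qed
    then show ?case by blast
  qed
  have monoms: "mon U \<in> J" if U: "U \<subseteq> {1..n}" "card U = n - s" for U
  proof (cases "U \<inter> A = {}")
    case False then show ?thesis using g3 U by blast
  next
    case True
    define S where "S = A \<union> U"
    have fU: "finite U" using U finite_subset by blast
    have SA: "A \<subseteq> {1..n}" using nbig by (auto simp: A_def)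
    have cS: "card S = n - t" unfolding S_def using True fU assms(4) U nbig
      by (subst card_Un_disjoint) (auto simp: A_def)
    have S1: "S \<subseteq> {1..n}" using SA U by (auto simp: S_def)
    have fS: "finite S" using S1 finite_subset by blast
    have eS: "esym (n - s) S \<in> J" using main[of "n - s"] ble[of t] cS S1 by blast
    let ?B = "{T. T \<subseteq> S \<and> card T = n - s}"
    have UB: "U \<in> ?B" using U by (auto simp: S_def)
    have fB: "finite ?B" using fS by (rule finite_subsets_card)
    have eq1: "(esym (n - s) S :: 'a mpoly) = mon U + (\<Sum>T\<in>?B - {U}. mon T)"
      unfolding esym_def using sum.remove[OF fB UB] by simp
    moreover have "(\<Sum>T\<in>?B - {U}. mon T :: 'a mpoly) \<in> J"
    proof (rule ig_sum[of _ _ n "G - Rem", folded JJ])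
      fix T assume T: "T \<in> ?B - {U}"
      have "T \<inter> A \<noteq> {}"
      proof
        assume "T \<inter> A = {}"
        then have "T \<subseteq> U" using T by (auto simp: S_def)
        moreover have "card T = card U" using T U by simp
        ultimately have "T = U" using card_subset_eq[OF fU] by blast
        then show False using T by blast
      qed
      then show "mon T \<in> J" using g3[of T] T S1 by auto
    qed (use fB in simp)
    ultimately have "esym (n - s) S - (\<Sum>T\<in>?B - {U}. mon T) \<in> J"
      using eS unfolding J_def by (intro ig_diff) auto
    moreover have "esym (n - s) S - (\<Sum>T\<in>?B - {U}. mon T) = (mon U :: 'a mpoly)"
      using eq1 by simp
    ultimately show ?thesis by simp
  qed
  have DPJ: "DP_gens lam n \<subseteq> J"
  proof
    fix x assume "x \<in> (DP_gens lam n :: 'a mpoly set)"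
    then have "x \<in> (\<Union>m\<in>{1..n}. \<Union>r\<in>{r. r \<le> m \<and> m < r + delta lam n m}. esym_set n r m)"
      unfolding DP_gens_def .
    then obtain m where m1: "m \<in> {1..n}"
      and xm: "x \<in> (\<Union>r\<in>{r. r \<le> m \<and> m < r + delta lam n m}. esym_set n r m)" by (rule UN_E)
    obtain r where r: "r \<in> {r. r \<le> m \<and> m < r + delta lam n m}" and xr: "x \<in> esym_set n r m"
      by (rule UN_E[OF xm])
    from xr have "\<exists>S. x = esym r S \<and> S \<subseteq> {1..n} \<and> card S = m" unfolding esym_set_def mem_Collect_eq .
    then obtain S where x: "x = esym r S" and S: "S \<subseteq> {1..n}" "card S = m" by blast
    have m: "m \<in> {1..n}" "r \<le> m" "m < r + delta lam n m" using m1 r by auto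
    define k where "k = n - m"
    have mk: "m = n - k" "k \<le> n" using m by (auto simp: k_def)
    have dl: "delta lam n m = n - P k" using delta_eq[of m] m by (simp add: k_def)
    consider "k \<le> t" | "t < k" "k \<le> s" | "s < k" by linarith
    then show "x \<in> J"
    proof cases
      case 1
      have "b k \<le> r" using m(3) dl bP[of k] Pk[of k] Ple[of k] 1 assms(4) mk by simp
      have "\<forall>k S. k \<le> t \<longrightarrow> b k \<le> r \<longrightarrow> S \<subseteq> {1..n} \<longrightarrow> card S = n - k \<longrightarrow> esym r S \<in> J"
        by (rule main)
      then have "esym r S \<in> J" using 1 \<open>b k \<le> r\<close> S mk by simp
      then show ?thesis using x by simp
    next
      case 2
      have "P k = k + (n - (s + 1))" using PQ[of k] Qbig[of k] 2 Qle[of k] by simp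
      then have rs: "n - s \<le> r" using m(3) dl mk 2 nbig by simp
      have fS: "finite S" using S finite_subset by blast
      have "(\<Sum>T\<in>{T. T \<subseteq> S \<and> card T = r}. mon T :: 'a mpoly) \<in> J"
      proof (rule ig_sum[of _ _ n "G - Rem", folded JJ])
        fix T assume T: "T \<in> {T. T \<subseteq> S \<and> card T = r}"
        then have fT: "finite T" using fS finite_subset by blast
        have "n - s \<le> card T" using T rs by simp
        then obtain U where U: "U \<subseteq> T" "card U = n - s" by (rule obtain_subset_with_card_n)
        have "(mon T :: 'a mpoly) = mon (T - U) * mon U" by (rule prod.subset_diff[OF U(1) fT])
        moreover have "U \<subseteq> {1..n}" using U(1) T S by blast
        then have "(mon U :: 'a mpoly) \<in> J" using monoms[of U] U(2) by simp
        moreover have "(mon (T - U) :: 'a mpoly) \<in> polys_in n"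
          by (rule polys_in_prod) (use T S fT in auto)
        ultimately show "(mon T :: 'a mpoly) \<in> J" unfolding J_def by (simp add: ig_mult)
      qed (rule finite_subsets_card[OF fS])
      then show ?thesis using x by (simp add: esym_def)
    next
      case 3
      have "P k = n" using PQ[of k] Qbig[of k] 3 assms(4) nbig by simp
      then show ?thesis using m dl by simp
    qed
  qed
  have GDP: "G - Rem \<subseteq> DP_gens lam n"
  proof
    fix x assume "x \<in> G - Rem"
    then have "x \<in> G" by simp
    then consider (a) r where "r \<in> {1..len - 1}" "x \<in> esym_set n r n"
      | (b) k where "k \<in> {1..t}" "x \<in> esym_set n (b k) (n - k)"
      | (c) "x \<in> esym_set n (n - s) (n - s)"
      unfolding G_def len_def by blast
    then show "x \<in> DP_gens lam n"
    proof cases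
      case a
      have "delta lam n n = n" using delta_eq[of n] by (simp add: P_def)
      then show ?thesis unfolding DP_gens_def using a nbig
        by (intro UN_I[of n] UN_I[of r]) auto
    next
      case b
      have "delta lam n (n - k) = n - P k" using delta_eq[of "n - k"] b nbig assms(4) by simp
      moreover have "P k + 1 < n" using PQ[of k] Qle[of k] b assms(4) by simp
      moreover have "k \<le> P k" using Pk[of k] b assms(4) by simp
      ultimately show ?thesis unfolding DP_gens_def using b nbig assms(4) bP[of k]
        by (intro UN_I[of "n - k"] UN_I[of "b k"]) auto
    next
      case c
      have "P s = n - 1" using PQ[of s] Qbig[of s] assms(4) by simp
      then have "delta lam n (n - s) = 1" using delta_eq[of "n - s"] nbig assms(4) by simp
      then show ?thesis unfolding DP_gens_def using c nbig len2
        by (intro UN_I[of "n - s"] UN_I[of "n - s"]) auto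
    qed
  qed
  show ?thesis
  proof
    show "ideal_gen n (G - Rem) \<subseteq> (DP_ideal lam n :: 'a mpoly set)"
      unfolding DP_ideal_def by (rule ig_mono[OF GDP])
    show "(DP_ideal lam n :: 'a mpoly set) \<subseteq> ideal_gen n (G - Rem)"
      unfolding DP_ideal_def by (rule ig_subset) (use DPJ J_def in simp)
  qed
qed

end
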